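(* Let $n\ge1$, $\rho\in(0,1)$, $\alpha\ge0$, and let $F:\mathbb{R}^n\to\mathbb{R}^n$ be $\rho$-Lipschitz with $F(x)=Gx+\xi(x)$, where $G\in\mathbb{R}^{n\times n}$ is symmetric positive semidefinite with $G\preccurlyeq\rho I$ and $\xi:\mathbb{R}^n\to\mathbb{R}^n$ is $\alpha$-Lipschitz. Let $C\ge1$, $k>2$ an integer, $x_0\in\mathbb{R}^n$, and let $x_e$ be the output of Constrained Anderson Acceleration started at $x_0$ with parameters $C,k$. Then $\|F(x_e)-x_e\|\le\hat\rho(C)\|F(x_0)-x_0\|$, where $\hat\rho(C)=\tilde\rho(C)+3\alpha kC$. Moreover, for every positive integer $M$, $$\hat\rho(C)\le\max_{i\in\{-1,\dots,M\}}\max\Big(\frac{C-C_i}{C_{i+1}-C_i}\rho_{i+1}+\frac{C_{i+1}-C}{C_{i+1}-C_i}\rho_i,\ \rho_*\Big)+3\alpha kC.$$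
   Context: $\|\cdot\|$ is the Euclidean norm; $\mathbb{R}_k[X]$ is real polynomials of degree at most $k$; $\|p\|_1$ is the sum of absolute values of coefficients of $p$, and $\|c\|_1=\sum_i|c_i|$. Constrained Anderson Acceleration: set $x_{i+1}=F(x_i)$ for $i=0,\dots,k$; $R=[x_0-x_1,\dots,x_k-x_{k+1}]$; $\tilde c\in\arg\min\{\|Rc\|:\mathbf 1^Tc=1,\ \|c\|_1\le C\}$; output $x_e=\sum_{i=0}^k\tilde c_ix_i$. $\tilde\rho(C)=\min\{\max_{x\in[0,\rho]}|p(x)|:p\in\mathbb{R}_k[X],\ p(1)=1,\ \|p\|_1\le C\}$. $T_k$ is the first-kind Chebyshev polynomial of degree $k$; for $\varepsilon\ge0$, $p_\varepsilon(X)=T_k\big(2\frac{X+\varepsilon}{\rho+\varepsilon}-1\big)/\big|T_k\big(2\frac{1+\varepsilon}{\rho+\varepsilon}-1\big)\big|$; $C_*=\|p_0\|_1$; $\rho_*=\frac{2\beta^k}{1+\beta^{2k}}$ with $\beta=\frac{1-\sqrt{1-\rho}}{1+\sqrt{1-\rho}}$. Given $M$: $\varepsilon_i=\rho/2^{i-1}$, $C_i=\|p_{\varepsilon_i}\|_1$ and $\rho_i=\frac{2\beta_i^k}{1+\beta_i^{2k}}$ with $\beta_i=\frac{1-\sqrt{1-\frac{\rho+\varepsilon_i}{1+\varepsilon_i}}}{1+\sqrt{1-\frac{\rho+\varepsilon_i}{1+\varepsilon_i}}}$ for $i=1,\dots,M$; $C_{-1}=1$, $\rho_{-1}=\rho^k$;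 $C_0=\frac{2+\rho^k}{2-\rho^k}$, $\rho_0=\frac{\rho^k}{2-\rho^k}$; $C_{M+1}=C_*$, $\rho_{M+1}=\rho_*$. *)

theory Defs
  imports "HOL-Analysis.Analysis" "HOL-Computational_Algebra.Polynomial"
begin

fun cheb :: "nat \<Rightarrow> real poly" where
  "cheb 0 = 1"
| "cheb (Suc 0) = [:0, 1:]"
| "cheb (Suc (Suc n)) = [:0, 2:] * cheb (Suc n) - cheb n"

definition poly_l1 :: "real poly \<Rightarrow> real" where
  "poly_l1 p = (\<Sum>i\<le>degree p. \<bar>coeff p i\<bar>)"

definition rho_tilde :: "real \<Rightarrow> nat \<Rightarrow> real \<Rightarrow> real" where
  "rho_tilde \<rho> k C = Inf {Sup ((\<lambda>x. \<bar>poly p x\<bar>) ` {0..\<rho>}) | p.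
      degree p \<le> k \<and> poly p 1 = 1 \<and> poly_l1 p \<le> C}"

definition p_eps :: "real \<Rightarrow> nat \<Rightarrow> real \<Rightarrow> real poly" where
  "p_eps \<rho> k \<epsilon> =
     smult (1 / \<bar>poly (cheb k) (2 * (1 + \<epsilon>) / (\<rho> + \<epsilon>) - 1)\<bar>)
       (pcompose (cheb k) [: 2 * \<epsilon> / (\<rho> + \<epsilon>) - 1, 2 / (\<rho> + \<epsilon>) :])"

definition beta_of :: "real \<Rightarrow> real" where
  "beta_of r = (1 - sqrt (1 - r)) / (1 + sqrt (1 - r))"

definition rate_of_beta :: "nat \<Rightarrow> real \<Rightarrow> real" where
  "rate_of_beta k b = 2 * b ^ k / (1 + b ^ (2 * k))"

definition C_star :: "real \<Rightarrow> nat \<Rightarrow> real" where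
  "C_star \<rho> k = poly_l1 (p_eps \<rho> k 0)"

definition rho_star :: "real \<Rightarrow> nat \<Rightarrow> real" where
  "rho_star \<rho> k = rate_of_beta k (beta_of \<rho>)"

definition eps_i :: "real \<Rightarrow> int \<Rightarrow> real" where
  "eps_i \<rho> i = \<rho> / 2 powi (i - 1)"

definition C_node :: "real \<Rightarrow> nat \<Rightarrow> nat \<Rightarrow> int \<Rightarrow> real" where
  "C_node \<rho> k M i =
    (if i = -1 then 1
     else if i = 0 then (2 + \<rho> ^ k) / (2 - \<rho> ^ k)
     else if 1 \<le> i \<and> i \<le> int M then poly_l1 (p_eps \<rho> k (eps_i \<rho> i))
     else C_star \<rho> k)"

definition rho_node :: "real \<Rightarrow> nat \<Rightarrow> nat \<Rightarrow> int \<Rightarrow> real" where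
  "rho_node \<rho> k M i =
    (if i = -1 then \<rho> ^ k
     else if i = 0 then \<rho> ^ k / (2 - \<rho> ^ k)
     else if 1 \<le> i \<and> i \<le> int M then
       rate_of_beta k (beta_of ((\<rho> + eps_i \<rho> i) / (1 + eps_i \<rho> i)))
     else rho_star \<rho> k)"

definition caa_iter :: "('a \<Rightarrow> 'a) \<Rightarrow> 'a \<Rightarrow> nat \<Rightarrow> 'a" where
  "caa_iter F x0 i = (F ^^ i) x0"

definition caa_feasible :: "nat \<Rightarrow> real \<Rightarrow> (nat \<Rightarrow> real) \<Rightarrow> bool" where
  "caa_feasible k C c \<longleftrightarrow> (\<Sum>i\<le>k. c i) = 1 \<and> (\<Sum>i\<le>k. \<bar>c i\<bar>) \<le> C"

definition caa_resid :: "('a::real_vector \<Rightarrow> 'a) \<Rightarrow> 'a \<Rightarrow> nat \<Rightarrow> (nat \<Rightarrow> real) \<Rightarrow> 'a" where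
  "caa_resid F x0 k c = (\<Sum>i\<le>k. c i *\<^sub>R (caa_iter F x0 i - caa_iter F x0 (Suc i)))"

definition caa_output :: "('a::real_normed_vector \<Rightarrow> 'a) \<Rightarrow> nat \<Rightarrow> real \<Rightarrow> 'a \<Rightarrow> 'a \<Rightarrow> bool" where
  "caa_output F k C x0 xe \<longleftrightarrow>
    (\<exists>c. caa_feasible k C c
       \<and> (\<forall>d. caa_feasible k C d \<longrightarrow> norm (caa_resid F x0 k c) \<le> norm (caa_resid F x0 k d))
       \<and> xe = (\<Sum>i\<le>k. c i *\<^sub>R caa_iter F x0 i))"

end

theory Submission
  imports Defs
begin



lemma quad_nonpos_imp:
  fixes a B :: real
  assumes "\<And>t. 2 * t * a + t^2 * B \<le> 0"
  shows "a = 0"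
proof (rule ccontr)
  assume "a \<noteq> 0"
  define t where "t = a / (1 + \<bar>B\<bar>)"
  have pos: "0 < 1 + \<bar>B\<bar>" by simp
  have td: "a = t * (1 + \<bar>B\<bar>)" unfolding t_def using pos by simp
  have t0: "t \<noteq> 0" using \<open>a \<noteq> 0\<close> td by auto
  have A: "2 * t * a + t^2 * B \<ge> 2 * t * a - t^2 * \<bar>B\<bar>"
  proof -
    have "t^2 * (- \<bar>B\<bar>) \<le> t^2 * B" by (intro mult_left_mono) auto
    then show ?thesis by simp
  qed
  have E: "2 * t * a - t^2 * \<bar>B\<bar> = t^2 * (2 + \<bar>B\<bar>)"
    unfolding td by (simp add: power2_eq_square algebra_simps)
  have P: "t^2 * (2 + \<bar>B\<bar>) > 0" using t0 by (intro mult_pos_pos) auto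
  show False using assms[of t] A E P by linarith
qed

lemma eig_exists:
  fixes g :: "'a::euclidean_space \<Rightarrow> 'a"
  assumes lin: "linear g" and sym: "\<And>x y. g x \<bullet> y = x \<bullet> g y"
    and S: "subspace S" "g ` S \<subseteq> S" and x: "x \<in> S" "x \<noteq> 0"
  shows "\<exists>e \<mu>. e \<in> S \<and> norm e = 1 \<and> g e = \<mu> *\<^sub>R e"
proof -
  define K where "K = S \<inter> sphere 0 1"
  have "compact K" unfolding K_def
    using S(1) closed_subspace compact_sphere by (blast intro: closed_Int_compact)
  moreover have "K \<noteq> {}"
  proof -
    have "x /\<^sub>R norm x \<in> K" using x S(1) unfolding K_def
      by (auto simp: subspace_scale)
    then show ?thesis by blast
  qed
  moreover have "continuous_on K (\<lambda>y. y \<bullet> g y)"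
  proof -
    have "bounded_linear g" using lin linear_conv_bounded_linear by auto
    then have "continuous_on K g" by (rule linear_continuous_on)
    then show ?thesis by (intro continuous_on_inner continuous_on_id)
  qed
  ultimately obtain e where eK: "e \<in> K" and emax: "\<And>y. y \<in> K \<Longrightarrow> y \<bullet> g y \<le> e \<bullet> g e"
    using continuous_attains_sup by metis
  define \<mu> where "\<mu> = e \<bullet> g e"
  have eS: "e \<in> S" and ne: "norm e = 1" using eK unfolding K_def by auto
  have ee: "e \<bullet> e = 1" using ne by (simp add: dot_square_norm)
  have ray: "y \<bullet> g y \<le> \<mu> * (y \<bullet> y)" if "y \<in> S" for y
  proof (cases "y = 0")
    case True then show ?thesis using lin by (simp add: linear_0)
  next
    case False
    have "y /\<^sub>R norm y \<in> K" using that S(1) False unfolding K_def by (auto simp: subspace_scale)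
    then have "(y /\<^sub>R norm y) \<bullet> g (y /\<^sub>R norm y) \<le> \<mu>" using emax unfolding \<mu>_def by blast
    moreover have "g (y /\<^sub>R norm y) = (1 / norm y) *\<^sub>R g y"
      using linear_scale[OF lin, of "1 / norm y" y] by (simp add: divide_inverse)
    ultimately have "(y \<bullet> g y) / (norm y)^2 \<le> \<mu>"
      by (simp add: power2_eq_square divide_inverse mult.commute mult.left_commute)
    then show ?thesis using False by (simp add: field_simps dot_square_norm)
  qed
  have orth: "h \<bullet> (g e - \<mu> *\<^sub>R e) = 0" if hS: "h \<in> S" for h
  proof -
    define a where "a = h \<bullet> (g e - \<mu> *\<^sub>R e)"
    define B where "B = h \<bullet> g h - \<mu> * (h \<bullet> h)"
    have "2 * t * a + t^2 * B \<le> 0" for t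
    proof -
      have "e + t *\<^sub>R h \<in> S" using S(1) eS hS by (simp add: subspace_add subspace_scale)
      then have "(e + t *\<^sub>R h) \<bullet> g (e + t *\<^sub>R h) - \<mu> * ((e + t *\<^sub>R h) \<bullet> (e + t *\<^sub>R h)) \<le> 0"
        using ray[of "e + t *\<^sub>R h"] by linarith
      moreover have "(e + t *\<^sub>R h) \<bullet> g (e + t *\<^sub>R h) - \<mu> * ((e + t *\<^sub>R h) \<bullet> (e + t *\<^sub>R h))
          = 2 * t * a + t^2 * B"
        using lin sym[of e h] ee inner_commute[of h "g e"] unfolding a_def B_def \<mu>_def
        by (simp add: linear_add linear_scale inner_add_left inner_add_right inner_diff_right
            inner_commute[of h e] power2_eq_square algebra_simps)
      ultimately show ?thesis by simp
    qed
    then show ?thesis using quad_nonpos_imp a_def by blast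
  qed
  have "g e - \<mu> *\<^sub>R e \<in> S" using S eS by (auto simp: subspace_diff subspace_scale)
  then have "(g e - \<mu> *\<^sub>R e) \<bullet> (g e - \<mu> *\<^sub>R e) = 0" using orth by blast
  then have "g e = \<mu> *\<^sub>R e" by simp
  then show ?thesis using eS ne by blast
qed



definition pg :: "real poly \<Rightarrow> ('a::real_vector \<Rightarrow> 'a) \<Rightarrow> 'a \<Rightarrow> 'a" where
  "pg p g v = (\<Sum>i\<le>degree p. coeff p i *\<^sub>R (g ^^ i) v)"

lemma linear_funpow:
  fixes g :: "'a::real_vector \<Rightarrow> 'a"
  shows "linear g \<Longrightarrow> linear (g ^^ i)"
proof (induction i)
  case 0
  have "g ^^ 0 = (\<lambda>x. x)" by (simp add: fun_eq_iff)
  then show ?case by (simp add: linear_iff)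
next
  case (Suc i)
  have "linear (g \<circ> (g ^^ i))" using Suc by (intro linear_compose) auto
  moreover have "g ^^ Suc i = g \<circ> (g ^^ i)" by simp
  ultimately show ?case by (simp add: comp_def)
qed

lemma pg_add: "linear g \<Longrightarrow> pg p g (x + y) = pg p g x + pg p g y"
proof -
  assume lin: "linear g"
  have "(g ^^ i) (x + y) = (g ^^ i) x + (g ^^ i) y" for i
    using linear_add[OF linear_funpow[OF lin]] by blast
  then show ?thesis unfolding pg_def by (simp add: scaleR_add_right sum.distrib)
qed

lemma pg_scale: "linear g \<Longrightarrow> pg p g (c *\<^sub>R x) = c *\<^sub>R pg p g x"
proof -
  assume lin: "linear g"
  have "(g ^^ i) (c *\<^sub>R x) = c *\<^sub>R (g ^^ i) x" for i
    using linear_scale[OF linear_funpow[OF lin]] by blast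
  then show ?thesis unfolding pg_def by (simp add: scaleR_sum_right mult.commute)
qed

lemma pg_zero: "linear g \<Longrightarrow> pg p g 0 = 0"
  using pg_scale[of g p 0 0] by simp

lemma funpow_eig: "g e = \<mu> *\<^sub>R e \<Longrightarrow> linear g \<Longrightarrow> (g ^^ i) e = \<mu> ^ i *\<^sub>R e"
  by (induction i) (simp_all add: linear_scale)

lemma pg_eig: "g e = \<mu> *\<^sub>R e \<Longrightarrow> linear g \<Longrightarrow> pg p g e = poly p \<mu> *\<^sub>R e"
proof -
  assume a: "g e = \<mu> *\<^sub>R e" "linear g"
  show ?thesis unfolding pg_def poly_altdef scaleR_sum_left
    by (rule sum.cong) (simp_all add: funpow_eig[OF a])
qed

lemma funpow_inv: "subspace T \<Longrightarrow> g ` T \<subseteq> T \<Longrightarrow> w \<in> T \<Longrightarrow> (g ^^ i) w \<in> T"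
  by (induction i) auto

lemma pg_inv: "subspace T \<Longrightarrow> g ` T \<subseteq> T \<Longrightarrow> w \<in> T \<Longrightarrow> pg p g w \<in> T"
  unfolding pg_def using funpow_inv
  by (intro subspace_sum subspace_scale) auto

lemma pyth:
  fixes e u :: "'a::real_inner"
  assumes "e \<bullet> u = 0" "norm e = 1"
  shows "(norm (a *\<^sub>R e + u))^2 = a^2 + (norm u)^2"
proof -
  have "e \<bullet> e = 1" using assms(2) by (simp add: dot_square_norm)
  then show ?thesis using assms(1) unfolding power2_norm_eq_inner
    by (simp add:  inner_add_left inner_add_right inner_commute[of u e] power2_eq_square)
qed

lemma spec_bound:
  fixes g :: "'a::euclidean_space \<Rightarrow> 'a"
  assumes lin: "linear g" and sym: "\<And>x y. g x \<bullet> y = x \<bullet> g y"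
    and psd: "\<And>x. 0 \<le> x \<bullet> g x" and le: "\<And>x. x \<bullet> g x \<le> \<rho> * (x \<bullet> x)"
    and pb: "\<And>t. 0 \<le> t \<Longrightarrow> t \<le> \<rho> \<Longrightarrow> \<bar>poly p t\<bar> \<le> m" and r0: "0 \<le> \<rho>"
  shows "norm (pg p g v) \<le> m * norm v"
proof -
  have m0: "0 \<le> m" using pb[of 0] r0 by linarith
  have "\<forall>v\<in>S. norm (pg p g v) \<le> m * norm v" if "subspace S" "g ` S \<subseteq> S" for S
    using that
  proof (induction "dim S" arbitrary: S rule: less_induct)
    case less
    show ?case
    proof (cases "S \<subseteq> {0}")
      case True
      then show ?thesis using pg_zero[OF lin] by auto
    next
      case False
      then obtain x where x: "x \<in> S" "x \<noteq> 0" by auto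
      obtain e \<mu> where e: "e \<in> S" "norm e = 1" "g e = \<mu> *\<^sub>R e"
        using eig_exists[OF lin sym less.prems x] by blast
      have ee: "e \<bullet> e = 1" using e(2) by (simp add: dot_square_norm)
      have mu: "\<mu> = e \<bullet> g e" using e(3) ee by simp
      have mu0: "0 \<le> \<mu>" using psd[of e] mu by simp
      have mu1: "\<mu> \<le> \<rho>" using le[of e] mu ee by simp
      define S' where "S' = S \<inter> {y. e \<bullet> y = 0}"
      have sS': "subspace S'" unfolding S'_def
        using less.prems(1) subspace_hyperplane[of e] by (rule subspace_inter)
      have gS': "g ` S' \<subseteq> S'"
      proof
        fix z assume "z \<in> g ` S'"
        then obtain y where y: "y \<in> S'" "z = g y" by auto
        have "g y \<in> S" using y less.prems(2) unfolding S'_def by auto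
        moreover have "e \<bullet> g y = 0" using sym[of e y] e(3) y(1) unfolding S'_def by simp
        ultimately show "z \<in> S'" using y unfolding S'_def by simp
      qed
      have "dim S' < dim S"
      proof (rule dim_psubset)
        have "e \<notin> S'" unfolding S'_def using ee by simp
        moreover have "S' \<subseteq> S" unfolding S'_def by blast
        ultimately have "S' \<subset> S" using e(1) by blast
        moreover have "span S' = S'" using sS' by simp
        moreover have "span S = S" using less.prems(1) by simp
        ultimately show "span S' \<subset> span S" by (simp only:)
      qed
      then have IH: "\<forall>w\<in>S'. norm (pg p g w) \<le> m * norm w"
        using less.hyps sS' gS' by blast
      show ?thesis
      proof
        fix v assume vS: "v \<in> S"
        define a where "a = e \<bullet> v"
        define w where "w = v - a *\<^sub>R e"
        have wS: "w \<in> S'" unfolding S'_def w_def a_def using vS e(1) less.prems(1) ee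
          by (auto simp: subspace_diff subspace_scale inner_diff_right)
        have v: "v = a *\<^sub>R e + w" unfolding w_def by simp
        have pw: "pg p g w \<in> S'" using pg_inv[OF sS' gS' wS] .
        have "pg p g v = (a * poly p \<mu>) *\<^sub>R e + pg p g w"
          using v pg_add[OF lin] pg_scale[OF lin] pg_eig[OF e(3) lin] by simp
        then have "(norm (pg p g v))^2 = (a * poly p \<mu>)^2 + (norm (pg p g w))^2"
          using pyth[of e "pg p g w" "a * poly p \<mu>"] pw e(2) unfolding S'_def by simp
        also have "\<dots> \<le> (a * m)^2 + (m * norm w)^2"
        proof -
          have "\<bar>poly p \<mu>\<bar> \<le> m" using pb mu0 mu1 by simp
          then have "(a * poly p \<mu>)^2 \<le> (a * m)^2"
            by (simp add: power_mult_distrib mult_left_mono power_mono abs_le_square_iff[symmetric]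
                  abs_mult)
          moreover have "(norm (pg p g w))^2 \<le> (m * norm w)^2"
            using IH wS by (simp add: power_mono)
          ultimately show ?thesis by simp
        qed
        also have "\<dots> = (m * norm v)^2"
        proof -
          have ew: "e \<bullet> w = 0" using wS unfolding S'_def by simp
          have nv: "(norm v)^2 = a^2 + (norm w)^2"
            using pyth[OF ew e(2), of a] v by metis
          have "(a * m)^2 + (m * norm w)^2 = m^2 * (a^2 + (norm w)^2)"
            by (simp only: power_mult_distrib distrib_left mult.commute)
          also have "\<dots> = m^2 * (norm v)^2" by (simp only: nv)
          also have "\<dots> = (m * norm v)^2" by (simp only: power_mult_distrib)
          finally show ?thesis .
        qed
        finally have sq: "(norm (pg p g v))^2 \<le> (m * norm v)^2" .
        show "norm (pg p g v) \<le> m * norm v"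
          by (rule power2_le_imp_le[OF sq]) (use m0 in simp)
      qed
    qed
  qed
  then have "\<forall>v\<in>UNIV. norm (pg p g v) \<le> m * norm v" using subspace_UNIV by blast
  then show ?thesis by simp
qed



lemma cheb_cos: "poly (cheb n) (cos \<theta>) = cos (real n * \<theta>)"
proof (induction n rule: cheb.induct)
  case 1 then show ?case by simp
next
  case 2 then show ?case by simp
next
  case (3 n)
  have trig: "2 * cos t * cos A - cos (A - t) = cos (A + t)" for t A :: real
    by (simp add: cos_add cos_diff)
  have b: "cos (real n * \<theta>) = cos (real (Suc n) * \<theta> - \<theta>)"
    by (simp add: algebra_simps)
  have "poly (cheb (Suc (Suc n))) (cos \<theta>) = 2 * cos \<theta> * poly (cheb (Suc n)) (cos \<theta>) - poly (cheb n) (cos \<theta>)"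
    by simp
  also have "\<dots> = 2 * cos \<theta> * cos (real (Suc n) * \<theta>) - cos (real n * \<theta>)"
    by (simp only: 3(1) 3(2))
  also have "\<dots> = 2 * cos \<theta> * cos (real (Suc n) * \<theta>) - cos (real (Suc n) * \<theta> - \<theta>)"
    by (simp only: b)
  also have "\<dots> = cos (real (Suc n) * \<theta> + \<theta>)" by (rule trig)
  also have "\<dots> = cos (real (Suc (Suc n)) * \<theta>)" by (simp add: algebra_simps)
  finally show ?case .
qed

lemma cheb_bound: "\<bar>x\<bar> \<le> 1 \<Longrightarrow> \<bar>poly (cheb n) x\<bar> \<le> 1"
proof -
  assume "\<bar>x\<bar> \<le> 1"
  then have "x = cos (arccos x)" by (simp add: cos_arccos_abs)
  then have "poly (cheb n) x = cos (real n * arccos x)" using cheb_cos by metis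
  then show ?thesis by simp
qed

lemma cheb_z: "z \<noteq> 0 \<Longrightarrow> poly (cheb n) ((z + 1 / z) / 2) = (z ^ n + 1 / z ^ n) / 2"
proof (induction n rule: cheb.induct)
  case 1 then show ?case by simp
next
  case 2 then show ?case by simp
next
  case (3 n)
  define y where "y = (z + 1 / z) / 2"
  have "poly (cheb (Suc (Suc n))) y = 2 * y * poly (cheb (Suc n)) y - poly (cheb n) y"
    by simp
  also have "\<dots> = 2 * y * ((z ^ Suc n + 1 / z ^ Suc n) / 2) - (z ^ n + 1 / z ^ n) / 2"
  proof -
    have i1: "poly (cheb (Suc n)) y = (z ^ Suc n + 1 / z ^ Suc n) / 2" using 3 unfolding y_def by blast
    have i2: "poly (cheb n) y = (z ^ n + 1 / z ^ n) / 2" using 3 unfolding y_def by blast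
    show ?thesis by (simp only: i1 i2)
  qed
  also have "\<dots> = (z ^ Suc (Suc n) + 1 / z ^ Suc (Suc n)) / 2"
    using 3(3) unfolding y_def by (simp add: field_simps power_Suc)
  finally show ?case unfolding y_def .
qed

lemma degree_cheb: "degree (cheb n) \<le> n"
proof (induction n rule: cheb.induct)
  case 1 then show ?case by simp
next
  case 2 then show ?case by simp
next
  case (3 n)
  have "degree ([:0, 2:] * cheb (Suc n)) \<le> Suc (Suc n)"
    using degree_mult_le[of "[:0, 2:]" "cheb (Suc n)"] 3 by simp
  moreover have "degree (cheb n) \<le> Suc (Suc n)" using 3 by simp
  ultimately show ?case using degree_diff_le by (simp add: degree_diff_le)
qed

lemma p_eps_props:
  assumes r: "0 < \<rho>" "\<rho> < 1" and e: "0 \<le> \<epsilon>"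
  shows "degree (p_eps \<rho> k \<epsilon>) \<le> k" "poly (p_eps \<rho> k \<epsilon>) 1 = 1"
    "\<And>x. 0 \<le> x \<Longrightarrow> x \<le> \<rho> \<Longrightarrow>
       \<bar>poly (p_eps \<rho> k \<epsilon>) x\<bar> \<le> rate_of_beta k (beta_of ((\<rho> + \<epsilon>) / (1 + \<epsilon>)))"
proof -
  define q where "q = [: 2 * \<epsilon> / (\<rho> + \<epsilon>) - 1, 2 / (\<rho> + \<epsilon>) :]"
  define y0 where "y0 = 2 * (1 + \<epsilon>) / (\<rho> + \<epsilon>) - 1"
  define T where "T = poly (cheb k) y0"
  have pe: "p_eps \<rho> k \<epsilon> = smult (1 / \<bar>T\<bar>) (pcompose (cheb k) q)"
    unfolding p_eps_def q_def T_def y0_def by simp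
  have pos: "0 < \<rho> + \<epsilon>" using r e by simp
  define rr where "rr = (\<rho> + \<epsilon>) / (1 + \<epsilon>)"
  have rr0: "0 < rr" and rr1: "rr < 1" unfolding rr_def using r e by (auto simp: field_simps)
  define s where "s = sqrt (1 - rr)"
  have s0: "0 < s" and s1: "s < 1" unfolding s_def using rr0 rr1 by auto
  have ss: "s^2 = 1 - rr" unfolding s_def using rr1 by simp
  define \<beta> where "\<beta> = (1 - s) / (1 + s)"
  have b: "beta_of rr = \<beta>" unfolding beta_of_def \<beta>_def s_def by simp
  have b0: "0 < \<beta>" unfolding \<beta>_def using s0 s1 by simp
  have ss1: "s * s < 1 * 1" using s0 s1 by (intro mult_strict_mono) auto
  have "(\<beta> + 1 / \<beta>) / 2 = (1 + s^2) / (1 - s^2)"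
    using ss1 unfolding \<beta>_def using s0 s1 by (simp add: field_simps power2_eq_square)
  also have "\<dots> = 2 / rr - 1" unfolding ss using rr0 by (simp add: field_simps)
  also have "\<dots> = y0" unfolding y0_def rr_def using pos e by simp
  finally have y0b: "y0 = (\<beta> + 1 / \<beta>) / 2" by simp
  have T: "T = (\<beta> ^ k + 1 / \<beta> ^ k) / 2" unfolding T_def y0b using cheb_z b0 by simp
  have Tpos: "0 < T" unfolding T using b0 by (intro divide_pos_pos add_pos_pos) simp_all
  have rate: "rate_of_beta k (beta_of rr) = 1 / T"
  proof -
    define bk where "bk = \<beta> ^ k"
    have bk0: "0 < bk" unfolding bk_def using b0 by simp
    have "\<beta> ^ (2 * k) = bk * bk" unfolding bk_def by (simp add: mult_2 power_add)
    then have "rate_of_beta k \<beta> = 2 * bk / (1 + bk * bk)" unfolding rate_of_beta_def bk_def by simp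
    also have "\<dots> = 1 / ((bk + 1 / bk) / 2)" using bk0 by (simp add: field_simps)
    finally show ?thesis unfolding b T bk_def .
  qed
  show "degree (p_eps \<rho> k \<epsilon>) \<le> k"
  proof -
    have dq: "degree q \<le> 1" unfolding q_def
      using degree_pCons_le[of "2 * \<epsilon> / (\<rho> + \<epsilon>) - 1" "[:2 / (\<rho> + \<epsilon>):]"] by simp
    have "degree (pcompose (cheb k) q) \<le> degree (cheb k) * degree q" by (rule degree_pcompose_le)
    also have "\<dots> \<le> k * 1" using dq degree_cheb[of k] by (intro mult_mono) auto
    finally show ?thesis unfolding pe by simp
  qed
  have pq: "poly q x = 2 * (x + \<epsilon>) / (\<rho> + \<epsilon>) - 1" for x
  proof -
    have "poly q x = 2 * \<epsilon> / (\<rho> + \<epsilon>) - 1 + x * (2 / (\<rho> + \<epsilon>))"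
      unfolding q_def by simp
    also have "\<dots> = 2 * (x + \<epsilon>) / (\<rho> + \<epsilon>) - 1"
      by (simp add: add_divide_distrib ring_distribs)
    finally show ?thesis .
  qed
  show "poly (p_eps \<rho> k \<epsilon>) 1 = 1"
    unfolding pe using Tpos by (simp add: poly_pcompose pq T_def y0_def add.commute)
  fix x assume x: "0 \<le> x" "x \<le> \<rho>"
  have "\<bar>poly q x\<bar> \<le> 1" unfolding pq using x pos e by (auto simp: field_simps abs_le_iff)
  then have "\<bar>poly (cheb k) (poly q x)\<bar> \<le> 1" by (rule cheb_bound)
  then have "\<bar>poly (p_eps \<rho> k \<epsilon>) x\<bar> \<le> 1 / T"
    unfolding pe using Tpos by (simp add: poly_pcompose divide_right_mono)
  then show "\<bar>poly (p_eps \<rho> k \<epsilon>) x\<bar> \<le> rate_of_beta k (beta_of ((\<rho> + \<epsilon>) / (1 + \<epsilon>)))"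
    using rate rr_def by simp
qed



lemma poly_l1_ext: "degree p \<le> N \<Longrightarrow> poly_l1 p = (\<Sum>i\<le>N. \<bar>coeff p i\<bar>)"
  unfolding poly_l1_def
  by (rule sum.mono_neutral_left) (auto simp: coeff_eq_0)

lemma poly_1_sum:
  fixes p :: "real poly"
  assumes d: "degree p \<le> N" shows "poly p 1 = (\<Sum>i\<le>N. coeff p i)"
proof -
  have "poly p 1 = (\<Sum>i\<le>degree p. coeff p i)" by (simp add: poly_altdef)
  also have "\<dots> = (\<Sum>i\<le>N. coeff p i)"
    by (rule sum.mono_neutral_left) (use d in \<open>auto simp: coeff_eq_0\<close>)
  finally show ?thesis .
qed

definition feas :: "real \<Rightarrow> nat \<Rightarrow> real \<Rightarrow> real \<Rightarrow> real poly \<Rightarrow> bool" where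
  "feas \<rho> k C B p \<longleftrightarrow> degree p \<le> k \<and> poly p 1 = 1 \<and> poly_l1 p \<le> C
     \<and> (\<forall>x. 0 \<le> x \<and> x \<le> \<rho> \<longrightarrow> \<bar>poly p x\<bar> \<le> B)"

lemma feas_comb:
  assumes "feas \<rho> k C1 B1 p" "feas \<rho> k C2 B2 q" "0 \<le> t" "t \<le> 1"
  shows "feas \<rho> k (t * C1 + (1 - t) * C2) (t * B1 + (1 - t) * B2) (smult t p + smult (1 - t) q)"
proof -
  let ?r = "smult t p + smult (1 - t) q"
  have dp: "degree p \<le> k" and dq: "degree q \<le> k" using assms unfolding feas_def by auto
  have dr: "degree ?r \<le> k"
    using dp dq by (intro degree_add_le) (auto intro: order_trans[OF degree_smult_le])
  have "poly_l1 ?r = (\<Sum>i\<le>k. \<bar>t * coeff p i + (1 - t) * coeff q i\<bar>)"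
    using poly_l1_ext[OF dr] by simp
  also have "\<dots> \<le> (\<Sum>i\<le>k. t * \<bar>coeff p i\<bar> + (1 - t) * \<bar>coeff q i\<bar>)"
  proof (rule sum_mono)
    fix i
    have "\<bar>t * coeff p i + (1 - t) * coeff q i\<bar> \<le> \<bar>t * coeff p i\<bar> + \<bar>(1 - t) * coeff q i\<bar>"
      by (rule abs_triangle_ineq)
    also have "\<dots> = t * \<bar>coeff p i\<bar> + (1 - t) * \<bar>coeff q i\<bar>"
      using assms(3,4) by (simp add: abs_mult)
    finally show "\<bar>t * coeff p i + (1 - t) * coeff q i\<bar> \<le> t * \<bar>coeff p i\<bar> + (1 - t) * \<bar>coeff q i\<bar>" .
  qed
  also have "\<dots> = t * poly_l1 p + (1 - t) * poly_l1 q"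
    using poly_l1_ext[OF dp] poly_l1_ext[OF dq] by (simp add: sum.distrib sum_distrib_left)
  also have "\<dots> \<le> t * C1 + (1 - t) * C2"
    using assms unfolding feas_def by (intro add_mono mult_left_mono) auto
  finally have l1: "poly_l1 ?r \<le> t * C1 + (1 - t) * C2" .
  have p1: "poly ?r 1 = 1" using assms unfolding feas_def by simp
  have bd: "\<bar>poly ?r x\<bar> \<le> t * B1 + (1 - t) * B2" if "0 \<le> x" "x \<le> \<rho>" for x
  proof -
    have "\<bar>poly ?r x\<bar> \<le> \<bar>t * poly p x\<bar> + \<bar>(1 - t) * poly q x\<bar>"
      by (simp add: abs_triangle_ineq)
    also have "\<dots> = t * \<bar>poly p x\<bar> + (1 - t) * \<bar>poly q x\<bar>"
      using assms(3,4) by (simp add: abs_mult)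
    also have "\<dots> \<le> t * B1 + (1 - t) * B2"
      using assms that unfolding feas_def by (intro add_mono mult_left_mono) auto
    finally show ?thesis .
  qed
  show ?thesis unfolding feas_def using dr l1 p1 bd by blast
qed

lemma bdd_poly:
  fixes p :: "real poly" shows "bdd_above ((\<lambda>x. \<bar>poly p x\<bar>) ` {0..\<rho>})"
proof -
  have "compact ((\<lambda>x. \<bar>poly p x\<bar>) ` {0..\<rho>})"
    by (intro compact_continuous_image continuous_intros) auto
  then show ?thesis by (intro bounded_imp_bdd_above compact_imp_bounded)
qed

lemma rho_tilde_le:
  assumes "feas \<rho> k C B p" "0 \<le> \<rho>"
  shows "rho_tilde \<rho> k C \<le> B"
proof -
  define S where "S = {Sup ((\<lambda>x. \<bar>poly p x\<bar>) ` {0..\<rho>}) | p.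
      degree p \<le> k \<and> poly p 1 = 1 \<and> poly_l1 p \<le> C}"
  have "Sup ((\<lambda>x. \<bar>poly p x\<bar>) ` {0..\<rho>}) \<in> S"
    using assms unfolding S_def feas_def by blast
  moreover have "bdd_below S"
  proof (rule bdd_belowI)
    fix s assume "s \<in> S"
    then obtain q where "s = Sup ((\<lambda>x. \<bar>poly q x\<bar>) ` {0..\<rho>})" unfolding S_def by blast
    moreover have "\<bar>poly q 0\<bar> \<le> Sup ((\<lambda>x. \<bar>poly q x\<bar>) ` {0..\<rho>})"
      using assms(2) by (intro cSup_upper bdd_poly) auto
    ultimately show "0 \<le> s" by simp
  qed
  ultimately have "Inf S \<le> Sup ((\<lambda>x. \<bar>poly p x\<bar>) ` {0..\<rho>})" by (rule cInf_lower)
  also have "\<dots> \<le> B"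
    using assms unfolding feas_def by (intro cSup_least) auto
  finally show ?thesis unfolding rho_tilde_def S_def .
qed



lemma feas_mono: "feas \<rho> k C B p \<Longrightarrow> C \<le> C' \<Longrightarrow> feas \<rho> k C' B p"
  unfolding feas_def by auto

lemma feas_eq: "feas \<rho> k C B p \<Longrightarrow> C = C' \<Longrightarrow> B = B' \<Longrightarrow> feas \<rho> k C' B' p"
  by simp

lemma node_m1:
  assumes "0 < \<rho>" shows "feas \<rho> k 1 (\<rho> ^ k) (monom 1 k)"
proof -
  have "poly_l1 (monom 1 k) = (\<Sum>i\<le>k. \<bar>coeff (monom (1::real) k) i\<bar>)"
    by (rule poly_l1_ext) (simp add: degree_monom_le)
  also have "\<dots> = 1" by (simp add: coeff_monom)
  finally have l1: "poly_l1 (monom 1 k) = 1" .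
  have "\<bar>poly (monom 1 k) x\<bar> \<le> \<rho> ^ k" if "0 \<le> x" "x \<le> \<rho>" for x
    using that by (simp add: poly_monom power_mono)
  then show ?thesis unfolding feas_def using l1 by (simp add: degree_monom_le poly_monom)
qed

lemma aux_frac2: "(R::real) < 2 \<Longrightarrow> 2 / (2 - R) * (R / 2) = R / (2 - R)"
proof -
  assume "R < 2"
  then have "2 - R \<noteq> 0" by simp
  then show "2 / (2 - R) * (R / 2) = R / (2 - R)" by (simp add: field_simps)
qed

lemma aux_frac: "(R::real) < 2 \<Longrightarrow> 2 / (2 - R) + 2 / (2 - R) * (R / 2) = (2 + R) / (2 - R)"
proof -
  assume "R < 2"
  then have "2 - R \<noteq> 0" by simp
  then have "2 / (2 - R) * (R / 2) = R / (2 - R)" by (simp add: field_simps)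
  then show ?thesis by (simp add: add_divide_distrib)
qed

lemma node_0:
  assumes r: "0 < \<rho>" "\<rho> < 1" and k: "1 \<le> k"
  shows "\<exists>p. feas \<rho> k ((2 + \<rho> ^ k) / (2 - \<rho> ^ k)) (\<rho> ^ k / (2 - \<rho> ^ k)) p"
proof -
  define h where "h = \<rho> ^ k / 2"
  have rk: "0 < \<rho> ^ k" "\<rho> ^ k < 1" using r k by (simp_all add: power_less_one_iff)
  have h0: "0 < h" and h1: "h < 1 / 2" unfolding h_def using rk by simp_all
  define a where "a = 1 / (1 - h)"
  have a0: "0 < a" unfolding a_def using h1 by simp
  have hh: "1 - h = (2 - \<rho> ^ k) / 2" unfolding h_def by simp
  have a2: "a = 2 / (2 - \<rho> ^ k)" unfolding a_def hh by simp
  have d0: "2 - \<rho> ^ k > 0" using rk by simp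
  define p where "p = smult a (monom 1 k - monom h 0)"
  have "degree (monom 1 k - monom h 0) \<le> k"
    by (rule degree_diff_le) (simp_all add: degree_monom_le order_trans[OF degree_monom_le[of h 0]])
  then have dp: "degree p \<le> k" unfolding p_def
    using degree_smult_le order_trans by blast
  have cp: "\<bar>coeff p j\<bar> = (if j = k then a else 0) + (if j = 0 then a * h else 0)" for j
    unfolding p_def using k a0 h0 by (auto simp: coeff_monom abs_mult)
  have "poly_l1 p = (\<Sum>j\<le>k. (if j = k then a else 0) + (if j = 0 then a * h else 0))"
    using poly_l1_ext[OF dp] cp by simp
  also have "\<dots> = a + a * h" by (simp add: sum.distrib)
  also have "\<dots> = (2 + \<rho> ^ k) / (2 - \<rho> ^ k)"
    unfolding a2 h_def using d0 aux_frac[of "\<rho> ^ k"] by simp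
  finally have l1: "poly_l1 p = (2 + \<rho> ^ k) / (2 - \<rho> ^ k)" .
  have p1: "poly p 1 = 1" unfolding p_def a_def using h1 by (simp add: poly_monom)
  have bd: "\<bar>poly p x\<bar> \<le> \<rho> ^ k / (2 - \<rho> ^ k)" if "0 \<le> x" "x \<le> \<rho>" for x
  proof -
    have "0 \<le> x ^ k" "x ^ k \<le> \<rho> ^ k" using that by (simp_all add: power_mono)
    then have "\<bar>x ^ k - h\<bar> \<le> h" unfolding h_def by arith
    then have "\<bar>poly p x\<bar> \<le> a * h" unfolding p_def using a0
      by (simp add: poly_monom abs_mult mult_left_mono)
    also have "a * h = \<rho> ^ k / (2 - \<rho> ^ k)" unfolding a2 h_def using d0 aux_frac2[of "\<rho> ^ k"] by simp
    finally show ?thesis .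
  qed
  have "feas \<rho> k ((2 + \<rho> ^ k) / (2 - \<rho> ^ k)) (\<rho> ^ k / (2 - \<rho> ^ k)) p"
    unfolding feas_def using dp l1 p1 bd by auto
  then show ?thesis by blast
qed

lemma node_feas:
  assumes r: "0 < \<rho>" "\<rho> < 1" and k: "1 \<le> k" and i: "-1 \<le> i" "i \<le> int M + 1"
  shows "\<exists>p. feas \<rho> k (C_node \<rho> k M i) (rho_node \<rho> k M i) p"
proof -
  consider "i = -1" | "i = 0" | "1 \<le> i \<and> i \<le> int M" | "i = int M + 1" using i by linarith
  then show ?thesis
  proof cases
    case 1
    have "C_node \<rho> k M i = 1" "rho_node \<rho> k M i = \<rho> ^ k"
      unfolding C_node_def rho_node_def using 1 by simp_all
    then show ?thesis using node_m1[OF r(1), of k] by (simp only:) blast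
  next
    case 2
    have "C_node \<rho> k M i = (2 + \<rho> ^ k) / (2 - \<rho> ^ k)" "rho_node \<rho> k M i = \<rho> ^ k / (2 - \<rho> ^ k)"
      unfolding C_node_def rho_node_def using 2 by simp_all
    then show ?thesis using node_0[OF r k] by (simp only:)
  next
    case 3
    have e0: "0 \<le> eps_i \<rho> i" unfolding eps_i_def using r by simp
    note P = p_eps_props[OF r e0, where k=k]
    have "feas \<rho> k (poly_l1 (p_eps \<rho> k (eps_i \<rho> i)))
        (rate_of_beta k (beta_of ((\<rho> + eps_i \<rho> i) / (1 + eps_i \<rho> i)))) (p_eps \<rho> k (eps_i \<rho> i))"
      unfolding feas_def using P by auto
    moreover have "C_node \<rho> k M i = poly_l1 (p_eps \<rho> k (eps_i \<rho> i))"
      unfolding C_node_def using 3 by simp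
    moreover have "rho_node \<rho> k M i = rate_of_beta k (beta_of ((\<rho> + eps_i \<rho> i) / (1 + eps_i \<rho> i)))"
      unfolding rho_node_def using 3 by simp
    ultimately show ?thesis by (simp only:) blast
  next
    case 4
    note P = p_eps_props[OF r order_refl, where k=k]
    have "feas \<rho> k (C_star \<rho> k) (rho_star \<rho> k) (p_eps \<rho> k 0)"
      unfolding feas_def C_star_def rho_star_def using P by auto
    moreover have "C_node \<rho> k M i = C_star \<rho> k"
      unfolding C_node_def using 4 by simp
    moreover have "rho_node \<rho> k M i = rho_star \<rho> k"
      unfolding rho_node_def using 4 by simp
    ultimately show ?thesis by (simp only:) blast
  qed
qed



lemma part2:
  assumes r: "0 < \<rho>" "\<rho> < 1" and C: "1 \<le> C" and k: "1 \<le> k"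
  shows "rho_tilde \<rho> k C
         \<le> Max ((\<lambda>i. max ((C - C_node \<rho> k M i) / (C_node \<rho> k M (i + 1) - C_node \<rho> k M i)
                              * rho_node \<rho> k M (i + 1)
                            + (C_node \<rho> k M (i + 1) - C) / (C_node \<rho> k M (i + 1) - C_node \<rho> k M i)
                              * rho_node \<rho> k M i)
                           (rho_star \<rho> k)) ` {-1..int M})"
    (is "_ \<le> Max (?f ` ?I)")
proof -
  define CN where "CN = C_node \<rho> k M"
  define RN where "RN = rho_node \<rho> k M"
  have fin: "finite (?f ` ?I)" by simp
  have maxge: "?f i \<le> Max (?f ` ?I)" if "i \<in> ?I" for i
    using that by (intro Max_ge[OF fin]) simp
  have r0: "0 \<le> \<rho>" using r by simp
  have CN1: "CN (-1) = 1" unfolding CN_def C_node_def by simp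
  show ?thesis
  proof (cases "CN (int M + 1) \<le> C")
    case True
    obtain p where p: "feas \<rho> k (CN (int M + 1)) (RN (int M + 1)) p"
      using node_feas[OF r k, of "int M + 1" M] unfolding CN_def RN_def by auto
    have "RN (int M + 1) = rho_star \<rho> k" unfolding RN_def rho_node_def by simp
    then have "feas \<rho> k C (rho_star \<rho> k) p" using feas_mono[OF p True] by simp
    then have "rho_tilde \<rho> k C \<le> rho_star \<rho> k" using rho_tilde_le r0 by blast
    also have "\<dots> \<le> ?f (-1)" by simp
    also have "\<dots> \<le> Max (?f ` ?I)" by (rule maxge) simp
    finally show ?thesis .
  next
    case False
    define J where "J = {j \<in> ?I. CN j \<le> C}"
    have finJ: "finite J" unfolding J_def by (rule finite_subset[of _ ?I]) auto
    have m1J: "-1 \<in> J" unfolding J_def using CN1 C by simp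
    define i where "i = Max J"
    have iJ: "i \<in> J" unfolding i_def using finJ m1J by (intro Max_in) auto
    have imax: "j \<le> i" if "j \<in> J" for j unfolding i_def using finJ that by simp
    have iI: "-1 \<le> i" "i \<le> int M" using iJ unfolding J_def by auto
    have CNi: "CN i \<le> C" using iJ unfolding J_def by simp
    have CNi1: "C < CN (i + 1)"
    proof (cases "i + 1 \<le> int M")
      case True
      show ?thesis
      proof (rule ccontr)
        assume "\<not> C < CN (i + 1)"
        then have "i + 1 \<in> J" unfolding J_def using True iI by auto
        then show False using imax[of "i + 1"] by simp
      qed
    next
      case F2: False
      then have "i + 1 = int M + 1" using iI by simp
      then show ?thesis using False by simp
    qed
    define D where "D = CN (i + 1) - CN i"
    have D0: "0 < D" unfolding D_def using CNi CNi1 by simp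
    define t where "t = (C - CN i) / D"
    have t0: "0 \<le> t" unfolding t_def using CNi D0 by simp
    have t1: "t \<le> 1" unfolding t_def using CNi1 D0 by (simp add: D_def)
    obtain p1 where p1: "feas \<rho> k (CN (i + 1)) (RN (i + 1)) p1"
      using node_feas[OF r k, of "i + 1" M] iI unfolding CN_def RN_def by auto
    obtain p0 where p0: "feas \<rho> k (CN i) (RN i) p0"
      using node_feas[OF r k, of i M] iI unfolding CN_def RN_def by auto
    have comb: "feas \<rho> k (t * CN (i + 1) + (1 - t) * CN i) (t * RN (i + 1) + (1 - t) * RN i)
        (smult t p1 + smult (1 - t) p0)"
      by (rule feas_comb[OF p1 p0 t0 t1])
    have tD: "t * D = C - CN i" unfolding t_def using D0 by simp
    have Ceq: "t * CN (i + 1) + (1 - t) * CN i = C"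
    proof -
      have "t * CN (i + 1) + (1 - t) * CN i = CN i + t * D" unfolding D_def by (simp add: algebra_simps)
      then show ?thesis using tD by simp
    qed
    have omt: "1 - t = (CN (i + 1) - C) / D"
      using D0 unfolding t_def by (simp add: field_simps D_def)
    have "rho_tilde \<rho> k C \<le> t * RN (i + 1) + (1 - t) * RN i"
      using rho_tilde_le[OF _ r0] comb Ceq by metis
    also have "\<dots> = (C - CN i) / D * RN (i + 1) + (CN (i + 1) - C) / D * RN i"
      by (subst omt) (simp only: t_def)
    also have "\<dots> \<le> ?f i" unfolding CN_def RN_def D_def by simp
    also have "\<dots> \<le> Max (?f ` ?I)" using iI by (intro maxge) simp
    finally show ?thesis .
  qed
qed



lemma sum_norm_bound:
  fixes c :: "nat \<Rightarrow> real" and v :: "nat \<Rightarrow> 'a::real_normed_vector"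
  assumes "\<And>i. i \<le> k \<Longrightarrow> norm (v i) \<le> B" "(\<Sum>i\<le>k. \<bar>c i\<bar>) \<le> C" "0 \<le> B"
  shows "norm (\<Sum>i\<le>k. c i *\<^sub>R v i) \<le> C * B"
proof -
  have "norm (\<Sum>i\<le>k. c i *\<^sub>R v i) \<le> (\<Sum>i\<le>k. norm (c i *\<^sub>R v i))" by (rule norm_sum)
  also have "\<dots> \<le> (\<Sum>i\<le>k. \<bar>c i\<bar> * B)"
    by (rule sum_mono) (use assms(1) in \<open>auto intro: mult_left_mono\<close>)
  also have "\<dots> = (\<Sum>i\<le>k. \<bar>c i\<bar>) * B" by (simp add: sum_distrib_right)
  also have "\<dots> \<le> C * B" using assms(2,3) by (rule mult_right_mono)
  finally show ?thesis .
qed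

lemma part1:
  fixes F \<xi> g :: "'a::euclidean_space \<Rightarrow> 'a"
  assumes lin: "linear g" and sym: "\<And>x y. g x \<bullet> y = x \<bullet> g y"
    and psd: "\<And>x. 0 \<le> x \<bullet> g x" and le: "\<And>x. x \<bullet> g x \<le> \<rho> * (x \<bullet> x)"
    and r: "0 < \<rho>" "\<rho> < 1" and alpha: "0 \<le> \<alpha>"
    and F_lip: "\<And>x y. norm (F x - F y) \<le> \<rho> * norm (x - y)"
    and F_dec: "\<And>x. F x = g x + \<xi> x"
    and xi_lip: "\<And>x y. norm (\<xi> x - \<xi> y) \<le> \<alpha> * norm (x - y)"
    and C: "1 \<le> C" and out: "caa_output F k C x0 xe"
  shows "norm (F xe - xe) \<le> (rho_tilde \<rho> k C + 3 * \<alpha> * real k * C) * norm (F x0 - x0)"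
proof -
  define x where "x = caa_iter F x0"
  define rr where "rr = (\<lambda>i. x i - x (Suc i))"
  define R where "R = norm (F x0 - x0)"
  have xS: "x (Suc i) = F (x i)" for i unfolding x_def caa_iter_def by simp
  have x0: "x 0 = x0" unfolding x_def caa_iter_def by simp
  have R0: "0 \<le> R" unfolding R_def by simp
  have nr0: "norm (rr 0) = R" unfolding rr_def R_def using xS[of 0] x0 by (simp add: norm_minus_commute)
  have nr: "norm (rr i) \<le> R" for i
  proof (induction i)
    case 0 then show ?case using nr0 by simp
  next
    case (Suc i)
    have "rr (Suc i) = F (x i) - F (x (Suc i))" unfolding rr_def using xS by simp
    then have "norm (rr (Suc i)) \<le> \<rho> * norm (rr i)" using F_lip unfolding rr_def by simp
    also have "\<dots> \<le> 1 * R" using Suc r by (intro mult_mono) auto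
    finally show ?case by simp
  qed
  have dx: "norm (x i - x0) \<le> real i * R" for i
  proof (induction i)
    case 0 then show ?case using x0 by simp
  next
    case (Suc i)
    have "x (Suc i) - x0 = (x i - x0) - rr i" unfolding rr_def by simp
    then have "norm (x (Suc i) - x0) \<le> norm (x i - x0) + norm (rr i)" by (metis norm_triangle_ineq4)
    also have "\<dots> \<le> real i * R + R" using Suc nr[of i] by simp
    finally show ?case by (simp add: algebra_simps)
  qed
  have gb: "norm (g y) \<le> norm y" for y
  proof -
    have "norm (pg [:0, 1:] g y) \<le> \<rho> * norm y"
      by (rule spec_bound[OF lin sym psd le]) (use r in auto)
    moreover have "pg [:0, 1:] g y = g y" unfolding pg_def by (simp add: numeral_eq_Suc)
    ultimately have "norm (g y) \<le> \<rho> * norm y" by simp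
    also have "\<dots> \<le> 1 * norm y" using r by (intro mult_right_mono) auto
    finally show ?thesis by simp
  qed
  have er: "norm (rr i - (g ^^ i) (rr 0)) \<le> real i * \<alpha> * R" for i
  proof (induction i)
    case 0 then show ?case by simp
  next
    case (Suc i)
    have "rr (Suc i) = F (x i) - F (x (Suc i))" unfolding rr_def using xS by simp
    also have "\<dots> = (g (x i) - g (x (Suc i))) + (\<xi> (x i) - \<xi> (x (Suc i)))" using F_dec by simp
    also have "\<dots> = g (rr i) + (\<xi> (x i) - \<xi> (x (Suc i)))" unfolding rr_def using linear_diff[OF lin] by simp
    finally have "rr (Suc i) - (g ^^ Suc i) (rr 0) = (g (rr i) - g ((g ^^ i) (rr 0))) + (\<xi> (x i) - \<xi> (x (Suc i)))"
      by simp
    also have "\<dots> = g (rr i - (g ^^ i) (rr 0)) + (\<xi> (x i) - \<xi> (x (Suc i)))"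
      using linear_diff[OF lin] by simp
    finally have eq: "rr (Suc i) - (g ^^ Suc i) (rr 0) = g (rr i - (g ^^ i) (rr 0)) + (\<xi> (x i) - \<xi> (x (Suc i)))" .
    have "norm (rr (Suc i) - (g ^^ Suc i) (rr 0)) \<le> norm (g (rr i - (g ^^ i) (rr 0))) + norm (\<xi> (x i) - \<xi> (x (Suc i)))"
      unfolding eq by (rule norm_triangle_ineq)
    also have "\<dots> \<le> real i * \<alpha> * R + \<alpha> * R"
    proof (rule add_mono)
      show "norm (g (rr i - (g ^^ i) (rr 0))) \<le> real i * \<alpha> * R" using gb Suc order_trans by blast
      have "norm (\<xi> (x i) - \<xi> (x (Suc i))) \<le> \<alpha> * norm (rr i)" using xi_lip unfolding rr_def by simp
      also have "\<dots> \<le> \<alpha> * R" using nr alpha by (intro mult_left_mono) auto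
      finally show "norm (\<xi> (x i) - \<xi> (x (Suc i))) \<le> \<alpha> * R" .
    qed
    finally show ?case by (simp add: algebra_simps)
  qed
  have resid: "caa_resid F x0 k d = (\<Sum>i\<le>k. d i *\<^sub>R rr i)" for d
    unfolding caa_resid_def rr_def x_def by simp
  have key: "norm (caa_resid F x0 k (coeff p)) \<le> (Sup ((\<lambda>t. \<bar>poly p t\<bar>) ` {0..\<rho>}) + \<alpha> * real k * C) * R"
    and feasp: "caa_feasible k C (coeff p)"
    if p: "degree p \<le> k" "poly p 1 = 1" "poly_l1 p \<le> C" for p
  proof -
    define s where "s = Sup ((\<lambda>t. \<bar>poly p t\<bar>) ` {0..\<rho>})"
    have pt: "\<bar>poly p t\<bar> \<le> s" if "0 \<le> t" "t \<le> \<rho>" for t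
      unfolding s_def by (rule cSup_upper[OF _ bdd_poly]) (use that in auto)
    have l1: "(\<Sum>i\<le>k. \<bar>coeff p i\<bar>) = poly_l1 p" using poly_l1_ext[OF p(1)] by simp
    show "caa_feasible k C (coeff p)"
      unfolding caa_feasible_def using poly_1_sum[OF p(1)] p(2,3) l1 by simp
    have sum_g: "(\<Sum>i\<le>k. coeff p i *\<^sub>R (g ^^ i) (rr 0)) = pg p g (rr 0)"
      unfolding pg_def by (rule sum.mono_neutral_right) (use p(1) in \<open>auto simp: coeff_eq_0\<close>)
    have b1: "norm (pg p g (rr 0)) \<le> s * R"
      using spec_bound[OF lin sym psd le pt, of "rr 0"] r nr0 by simp
    have b2: "norm (\<Sum>i\<le>k. coeff p i *\<^sub>R (rr i - (g ^^ i) (rr 0))) \<le> C * (real k * \<alpha> * R)"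
    proof (rule sum_norm_bound)
      fix i assume "i \<le> k"
      then have "real i * \<alpha> * R \<le> real k * \<alpha> * R" using alpha R0 by (intro mult_right_mono) auto
      then show "norm (rr i - (g ^^ i) (rr 0)) \<le> real k * \<alpha> * R" using er[of i] by simp
    qed (use l1 p(3) alpha R0 in auto)
    have split: "(\<Sum>i\<le>k. coeff p i *\<^sub>R rr i) = (\<Sum>i\<le>k. coeff p i *\<^sub>R (g ^^ i) (rr 0))
        + (\<Sum>i\<le>k. coeff p i *\<^sub>R (rr i - (g ^^ i) (rr 0)))"
      by (simp add: scaleR_diff_right sum_subtractf)
    have "norm (caa_resid F x0 k (coeff p)) \<le> norm (pg p g (rr 0)) + norm (\<Sum>i\<le>k. coeff p i *\<^sub>R (rr i - (g ^^ i) (rr 0)))"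
      unfolding resid split sum_g by (rule norm_triangle_ineq)
    also have "\<dots> \<le> s * R + C * (real k * \<alpha> * R)" using b1 b2 by (rule add_mono)
    also have "\<dots> = (s + \<alpha> * real k * C) * R" by (simp add: algebra_simps)
    finally show "norm (caa_resid F x0 k (coeff p)) \<le> (s + \<alpha> * real k * C) * R" unfolding s_def .
  qed
  from out obtain c where cf: "caa_feasible k C c"
    and copt: "\<And>d. caa_feasible k C d \<Longrightarrow> norm (caa_resid F x0 k c) \<le> norm (caa_resid F x0 k d)"
    and xe: "xe = (\<Sum>i\<le>k. c i *\<^sub>R x i)"
    unfolding caa_output_def x_def by blast
  have sc: "(\<Sum>i\<le>k. c i) = 1" and sc1: "(\<Sum>i\<le>k. \<bar>c i\<bar>) \<le> C" using cf unfolding caa_feasible_def by auto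
  have gxe: "g xe = (\<Sum>i\<le>k. c i *\<^sub>R (x (Suc i) - \<xi> (x i)))"
  proof -
    have "g xe = (\<Sum>i\<le>k. g (c i *\<^sub>R x i))" unfolding xe by (rule linear_sum[OF lin])
    also have "\<dots> = (\<Sum>i\<le>k. c i *\<^sub>R (x (Suc i) - \<xi> (x i)))"
    proof (rule sum.cong)
      fix i
      have "x (Suc i) = g (x i) + \<xi> (x i)" using xS F_dec by simp
      then show "g (c i *\<^sub>R x i) = c i *\<^sub>R (x (Suc i) - \<xi> (x i))"
        using linear_scale[OF lin] by simp
    qed simp
    finally show ?thesis .
  qed
  have Feq: "F xe - xe = - caa_resid F x0 k c + ((\<xi> xe - \<xi> x0) - (\<Sum>i\<le>k. c i *\<^sub>R (\<xi> (x i) - \<xi> x0)))"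
  proof -
    have s0: "(\<Sum>i\<le>k. c i *\<^sub>R \<xi> x0) = \<xi> x0" using sc by (simp add: scaleR_sum_left[symmetric])
    have "F xe - xe = (\<Sum>i\<le>k. c i *\<^sub>R (x (Suc i) - \<xi> (x i))) + \<xi> xe - (\<Sum>i\<le>k. c i *\<^sub>R x i)"
      using F_dec gxe xe by simp
    also have "\<dots> = - (\<Sum>i\<le>k. c i *\<^sub>R (x i - x (Suc i))) + (\<xi> xe - (\<Sum>i\<le>k. c i *\<^sub>R \<xi> (x i)))"
      by (simp add: scaleR_diff_right sum_subtractf algebra_simps)
    also have "(\<Sum>i\<le>k. c i *\<^sub>R \<xi> (x i)) = \<xi> x0 + (\<Sum>i\<le>k. c i *\<^sub>R (\<xi> (x i) - \<xi> x0))"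
      using s0 by (simp add: scaleR_diff_right sum_subtractf)
    finally show ?thesis unfolding resid rr_def by (simp add: algebra_simps)
  qed
  have dxe: "norm (xe - x0) \<le> C * (real k * R)"
  proof -
    have s0: "(\<Sum>i\<le>k. c i *\<^sub>R x0) = x0" using sc by (simp add: scaleR_sum_left[symmetric])
    have "xe - x0 = (\<Sum>i\<le>k. c i *\<^sub>R (x i - x0))"
      unfolding xe using s0 by (simp add: scaleR_diff_right sum_subtractf)
    also have "norm \<dots> \<le> C * (real k * R)"
    proof (rule sum_norm_bound)
      fix i assume "i \<le> k"
      then have "real i * R \<le> real k * R" using R0 by (intro mult_right_mono) auto
      then show "norm (x i - x0) \<le> real k * R" using dx[of i] by simp
    qed (use sc1 R0 in auto)
    finally show ?thesis .
  qed
  have b3: "norm (\<xi> xe - \<xi> x0) \<le> \<alpha> * C * real k * R"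
  proof -
    have "norm (\<xi> xe - \<xi> x0) \<le> \<alpha> * norm (xe - x0)" by (rule xi_lip)
    also have "\<dots> \<le> \<alpha> * (C * (real k * R))" using dxe alpha by (rule mult_left_mono)
    finally show ?thesis by (simp add: algebra_simps)
  qed
  have b4: "norm (\<Sum>i\<le>k. c i *\<^sub>R (\<xi> (x i) - \<xi> x0)) \<le> \<alpha> * C * real k * R"
  proof -
    have "norm (\<Sum>i\<le>k. c i *\<^sub>R (\<xi> (x i) - \<xi> x0)) \<le> C * (\<alpha> * (real k * R))"
    proof (rule sum_norm_bound)
      fix i assume "i \<le> k"
      then have "real i * R \<le> real k * R" using R0 by (intro mult_right_mono) auto
      then have "norm (x i - x0) \<le> real k * R" using dx[of i] by simp
      then have "\<alpha> * norm (x i - x0) \<le> \<alpha> * (real k * R)" using alpha by (rule mult_left_mono)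
      then show "norm (\<xi> (x i) - \<xi> x0) \<le> \<alpha> * (real k * R)" using xi_lip[of "x i" x0] by simp
    qed (use sc1 R0 alpha in auto)
    then show ?thesis by (simp add: algebra_simps)
  qed
  define S where "S = {Sup ((\<lambda>x. \<bar>poly p x\<bar>) ` {0..\<rho>}) | p.
      degree p \<le> k \<and> poly p 1 = 1 \<and> poly_l1 p \<le> C}"
  have main: "norm (F xe - xe) \<le> (s + 3 * \<alpha> * real k * C) * R" if "s \<in> S" for s
  proof -
    obtain p where p: "degree p \<le> k" "poly p 1 = 1" "poly_l1 p \<le> C"
      and s: "s = Sup ((\<lambda>x. \<bar>poly p x\<bar>) ` {0..\<rho>})"
      using \<open>s \<in> S\<close> unfolding S_def by blast
    have "norm (F xe - xe) \<le> norm (caa_resid F x0 k c) + (norm (\<xi> xe - \<xi> x0) + norm (\<Sum>i\<le>k. c i *\<^sub>R (\<xi> (x i) - \<xi> x0)))"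
    proof -
      have t1: "norm (- caa_resid F x0 k c + ((\<xi> xe - \<xi> x0) - (\<Sum>i\<le>k. c i *\<^sub>R (\<xi> (x i) - \<xi> x0))))
          \<le> norm (- caa_resid F x0 k c) + norm ((\<xi> xe - \<xi> x0) - (\<Sum>i\<le>k. c i *\<^sub>R (\<xi> (x i) - \<xi> x0)))"
        by (rule norm_triangle_ineq)
      have t2: "norm ((\<xi> xe - \<xi> x0) - (\<Sum>i\<le>k. c i *\<^sub>R (\<xi> (x i) - \<xi> x0)))
          \<le> norm (\<xi> xe - \<xi> x0) + norm (\<Sum>i\<le>k. c i *\<^sub>R (\<xi> (x i) - \<xi> x0))"
        by (rule norm_triangle_ineq4)
      show ?thesis unfolding Feq using t1 t2 by simp
    qed
    also have "\<dots> \<le> (s + \<alpha> * real k * C) * R + (\<alpha> * C * real k * R + \<alpha> * C * real k * R)"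
    proof (rule add_mono)
      show "norm (caa_resid F x0 k c) \<le> (s + \<alpha> * real k * C) * R"
        using copt[OF feasp[OF p]] key[OF p] s by simp
    qed (rule add_mono[OF b3 b4])
    also have "\<dots> = (s + 3 * \<alpha> * real k * C) * R" by (simp add: algebra_simps)
    finally show ?thesis .
  qed
  have Sne: "S \<noteq> {}"
  proof -
    have "degree (1::real poly) \<le> k" "poly (1::real poly) 1 = 1" "poly_l1 (1::real poly) \<le> C"
      using C by (simp_all add: poly_l1_def)
    then show ?thesis unfolding S_def by blast
  qed
  show ?thesis
  proof (cases "R = 0")
    case True
    obtain s where "s \<in> S" using Sne by blast
    from main[OF this] True show ?thesis unfolding R_def by simp
  next
    case False
    then have Rp: "0 < R" using R0 by simp
    have "norm (F xe - xe) / R - 3 * \<alpha> * real k * C \<le> Inf S"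
    proof (rule cInf_greatest[OF Sne])
      fix s assume "s \<in> S"
      from main[OF this] have "norm (F xe - xe) / R \<le> s + 3 * \<alpha> * real k * C"
        using Rp by (simp add: divide_le_eq)
      then show "norm (F xe - xe) / R - 3 * \<alpha> * real k * C \<le> s" by simp
    qed
    then have "norm (F xe - xe) / R \<le> rho_tilde \<rho> k C + 3 * \<alpha> * real k * C"
      unfolding rho_tilde_def S_def by simp
    then show ?thesis using Rp unfolding R_def[symmetric] by (simp add: divide_le_eq)
  qed
qed


theorem proposition6:
  fixes F \<xi> :: "real ^ 'n \<Rightarrow> real ^ 'n"
    and G :: "real ^ 'n ^ 'n"
    and \<rho> \<alpha> C :: real and k :: nat and x0 xe :: "real ^ 'n"
  assumes rho: "0 < \<rho>" "\<rho> < 1"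
    and alpha: "0 \<le> \<alpha>"
    and F_lip: "\<And>x y. norm (F x - F y) \<le> \<rho> * norm (x - y)"
    and F_dec: "\<And>x. F x = G *v x + \<xi> x"
    and G_sym: "transpose G = G"
    and G_psd: "\<And>x. 0 \<le> x \<bullet> (G *v x)"
    and G_le: "\<And>x. x \<bullet> (G *v x) \<le> \<rho> * (x \<bullet> x)"
    and xi_lip: "\<And>x y. norm (\<xi> x - \<xi> y) \<le> \<alpha> * norm (x - y)"
    and C: "1 \<le> C"
    and k: "2 < k"
    and out: "caa_output F k C x0 xe"
  shows "norm (F xe - xe) \<le> (rho_tilde \<rho> k C + 3 * \<alpha> * real k * C) * norm (F x0 - x0)
    \<and> (\<forall>M::nat. 0 < M \<longrightarrow>
         rho_tilde \<rho> k C + 3 * \<alpha> * real k * C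
         \<le> Max ((\<lambda>i. max ((C - C_node \<rho> k M i) / (C_node \<rho> k M (i + 1) - C_node \<rho> k M i)
                              * rho_node \<rho> k M (i + 1)
                            + (C_node \<rho> k M (i + 1) - C) / (C_node \<rho> k M (i + 1) - C_node \<rho> k M i)
                              * rho_node \<rho> k M i)
                           (rho_star \<rho> k)) ` {-1..int M})
           + 3 * \<alpha> * real k * C)"
proof -
  define g where "g = (\<lambda>x. G *v x)"
  have lin: "linear g" unfolding g_def by simp
  have sym: "g x \<bullet> y = x \<bullet> g y" for x y
  proof -
    have "(G *v x) \<bullet> y = (x v* transpose G) \<bullet> y" by (simp only: vector_transpose_matrix)
    also have "\<dots> = x \<bullet> (transpose G *v y)" by (rule dot_lmul_matrix)
    also have "\<dots> = x \<bullet> (G *v y)" by (simp only: G_sym)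
    finally show ?thesis unfolding g_def .
  qed
  have psd: "0 \<le> x \<bullet> g x" for x unfolding g_def by (rule G_psd)
  have le: "x \<bullet> g x \<le> \<rho> * (x \<bullet> x)" for x unfolding g_def by (rule G_le)
  have Fd: "F x = g x + \<xi> x" for x unfolding g_def by (rule F_dec)
  have k1: "1 \<le> k" using k by simp
  have P1: "norm (F xe - xe) \<le> (rho_tilde \<rho> k C + 3 * \<alpha> * real k * C) * norm (F x0 - x0)"
    by (rule part1[OF lin sym psd le rho alpha F_lip Fd xi_lip C out])
  show ?thesis
  proof (intro conjI allI impI)
    show "norm (F xe - xe) \<le> (rho_tilde \<rho> k C + 3 * \<alpha> * real k * C) * norm (F x0 - x0)" by (rule P1)
  next
    fix M :: nat assume "0 < M"
    show "rho_tilde \<rho> k C + 3 * \<alpha> * real k * C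
         \<le> Max ((\<lambda>i. max ((C - C_node \<rho> k M i) / (C_node \<rho> k M (i + 1) - C_node \<rho> k M i)
                              * rho_node \<rho> k M (i + 1)
                            + (C_node \<rho> k M (i + 1) - C) / (C_node \<rho> k M (i + 1) - C_node \<rho> k M i)
                              * rho_node \<rho> k M i)
                           (rho_star \<rho> k)) ` {-1..int M})
           + 3 * \<alpha> * real k * C"
      using part2[OF rho C k1, of M] by simp
  qed
qed

end
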